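(* Suppose the noise condition $\mathbb P_X(0<\Delta(X)\le\delta)\le(\gamma\delta/B)^\alpha$ for all $\delta>0$ holds for some $\alpha,\gamma\ge0$, and $\mathbb P(|\mathcal Z^*(X)|>1)=0$. Then for every policy $\pi:\mathbb R^p\to\mathcal Z^\angle$, $$d(\pi^*,\pi)\le 2\,d_\Delta(\pi^*,\pi),\qquad d_\Delta(\pi^*,\pi)\le c_1\, d(\pi^*,\pi)^{\frac{\alpha}{\alpha+1}},$$ where $c_1=(\alpha\gamma^\alpha)^{-\frac{\alpha}{\alpha+1}}(\alpha+1)\gamma^\alpha$.
   Context: Setting: $X\in\mathbb R^p$, $Y\in\mathbb R^d$ with $\|Y\|\le1$, $f^*(x)=\mathbb E[Y\mid X=x]$. $\mathcal Z=\{z:Az\le b\}$ is a polytope with $\sup_{z\in\mathcal Z}\|z\|\le B$ and finite set of extreme points $\mathcal Z^\angle$; $\mathcal Z^*(x)=\arg\min_{z\in\mathcal Z}f^*(x)^\top z$, $\pi^*(x)\in\mathcal Z^*(x)$; $\Delta(x)=\inf_{z\in\mathcal Z^\angle\setminus\mathcal Z^*(x)}f^*(x)^\top z-\inf_{z\in\mathcal Z}f^*(x)^\top z$ if $\mathcal Z^*(x)\ne\mathcal Z$, else $0$. For policies $\pi,\pi':\mathbb R^p\to\mathcal Z^\angle$, $d(\pi,\pi')=\frac1B\mathbb E_X[f^*(X)^\top(\pi'(X)-\pi(X))]$ and $d_\Delta(\pi,\pi')=\mathbb P_X(\pi(X)\ne\pi'(X))$. *)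

theory Defs
  imports "HOL-Probability.Probability"
begin

definition polyZ :: "real^'d^'m \<Rightarrow> real^'m \<Rightarrow> (real^'d) set" where
  "polyZ A b = {z. \<forall>i. (A *v z) $ i \<le> b $ i}"

definition extpts :: "(real^'d) set \<Rightarrow> (real^'d) set" where
  "extpts Z = {z. z extreme_point_of Z}"

definition optset :: "(real^'d) set \<Rightarrow> real^'d \<Rightarrow> (real^'d) set" where
  "optset Z c = {z \<in> Z. \<forall>z'\<in>Z. c \<bullet> z \<le> c \<bullet> z'}"

definition gap :: "(real^'d) set \<Rightarrow> real^'d \<Rightarrow> real" where
  "gap Z c = (if optset Z c \<noteq> Z
     then (INF z \<in> extpts Z - optset Z c. c \<bullet> z) - (INF z \<in> Z. c \<bullet> z)
     else 0)"

definition dpol :: "'a measure \<Rightarrow> ('a \<Rightarrow> real^'p) \<Rightarrow> (real^'p \<Rightarrow> real^'d) \<Rightarrow> real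
    \<Rightarrow> (real^'p \<Rightarrow> real^'d) \<Rightarrow> (real^'p \<Rightarrow> real^'d) \<Rightarrow> real" where
  "dpol M X f B p1 p2 = (1 / B) * (\<integral>\<omega>. f (X \<omega>) \<bullet> (p2 (X \<omega>) - p1 (X \<omega>)) \<partial>M)"

definition dDelta :: "'a measure \<Rightarrow> ('a \<Rightarrow> real^'p)
    \<Rightarrow> (real^'p \<Rightarrow> real^'d) \<Rightarrow> (real^'p \<Rightarrow> real^'d) \<Rightarrow> real" where
  "dDelta M X p1 p2 = measure M {\<omega> \<in> space M. p1 (X \<omega>) \<noteq> p2 (X \<omega>)}"

end

theory Submission
  imports Defs
begin


lemma polyZ_polyhedron: "polyhedron (polyZ A b)"
proof -
  have "polyZ A b = \<Inter> (range (\<lambda>i. {z. (A$i) \<bullet> z \<le> b$i}))"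
    by (auto simp: polyZ_def matrix_vector_mult_def inner_vec_def)
  moreover have "polyhedron (\<Inter> (range (\<lambda>i. {z. (A$i) \<bullet> z \<le> b$i})))"
    by (intro polyhedron_Inter) (auto intro: polyhedron_halfspace_le)
  ultimately show ?thesis by simp
qed

lemma extpts_sub: "extpts Z \<subseteq> Z"
  by (auto simp: extpts_def extreme_point_of_def)

lemma opt_not_iff:
  assumes "p \<in> optset Z c" "e \<in> Z"
  shows "e \<notin> optset Z c \<longleftrightarrow> c \<bullet> p < c \<bullet> e"
  using assms unfolding optset_def by (auto simp: not_le)

lemma opt_INF:
  assumes "p \<in> optset Z c"
  shows "(INF z\<in>Z. c \<bullet> z) = c \<bullet> p"
  using assms unfolding optset_def by (intro cInf_eq_minimum) auto

lemma gap_pos: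
  assumes p: "p \<in> optset Z c" and fin: "finite (extpts Z)" and e: "e \<in> extpts Z"
    and lt: "c \<bullet> p < c \<bullet> e"
  shows "0 < gap Z c \<and> gap Z c \<le> c \<bullet> e - c \<bullet> p"
proof -
  have eZ: "e \<in> Z" using e extpts_sub by blast
  have en: "e \<notin> optset Z c" using opt_not_iff[OF p eZ] lt by simp
  hence ne: "optset Z c \<noteq> Z" using eZ by blast
  define S where "S = extpts Z - optset Z c"
  have fS: "finite (((\<bullet>) c) ` S)" using fin S_def by simp
  have eS: "e \<in> S" using e en S_def by simp
  have I: "(INF z\<in>S. c \<bullet> z) = Min (((\<bullet>) c) ` S)"
    using cInf_eq_Min[OF fS] eS by auto
  have "Min (((\<bullet>) c) ` S) \<in> ((\<bullet>) c) ` S" using fS eS by (intro Min_in) auto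
  then obtain e' where e': "e' \<in> S" "Min (((\<bullet>) c) ` S) = c \<bullet> e'" by auto
  have "c \<bullet> p < c \<bullet> e'" using e' S_def opt_not_iff[OF p] extpts_sub by blast
  moreover have "Min (((\<bullet>) c) ` S) \<le> c \<bullet> e" using fS eS by auto
  ultimately show ?thesis
    unfolding gap_def using ne I opt_INF[OF p] e' S_def by auto
qed

lemma gap_char:
  assumes p: "p \<in> optset Z c" and fin: "finite (extpts Z)"
    and cpt: "compact Z" and cvx: "convex Z"
  shows "(0 < gap Z c \<and> gap Z c \<le> \<delta>) \<longleftrightarrow> (\<exists>e\<in>extpts Z. c \<bullet> p < c \<bullet> e \<and> c \<bullet> e - c \<bullet> p \<le> \<delta>)"
proof
  assume "\<exists>e\<in>extpts Z. c \<bullet> p < c \<bullet> e \<and> c \<bullet> e - c \<bullet> p \<le> \<delta>"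
  then show "0 < gap Z c \<and> gap Z c \<le> \<delta>" using gap_pos[OF p fin] by fastforce
next
  assume g: "0 < gap Z c \<and> gap Z c \<le> \<delta>"
  hence ne: "optset Z c \<noteq> Z" unfolding gap_def by auto
  have pZ: "p \<in> Z" using p optset_def by auto
  have oeq: "optset Z c = Z \<inter> {z. c \<bullet> z \<le> c \<bullet> p}"
    using p unfolding optset_def by (auto intro: order_trans)
  have "\<exists>e\<in>extpts Z. e \<notin> optset Z c"
  proof (rule ccontr)
    assume "\<not> ?thesis"
    hence "{x. x extreme_point_of Z} \<subseteq> optset Z c" by (auto simp: extpts_def)
    moreover have "convex (optset Z c)" unfolding oeq
      by (intro convex_Int cvx convex_halfspace_le)
    ultimately have "convex hull {x. x extreme_point_of Z} \<subseteq> optset Z c"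
      by (intro hull_minimal) auto
    hence "Z \<subseteq> optset Z c" using Krein_Milman_Minkowski[OF cpt cvx] by simp
    thus False using ne optset_def by auto
  qed
  then obtain e0 where e0: "e0 \<in> extpts Z" "e0 \<notin> optset Z c" by blast
  define S where "S = extpts Z - optset Z c"
  have fS: "finite (((\<bullet>) c) ` S)" using fin S_def by simp
  have eS: "e0 \<in> S" using e0 S_def by simp
  have I: "(INF z\<in>S. c \<bullet> z) = Min (((\<bullet>) c) ` S)"
    using cInf_eq_Min[OF fS] eS by auto
  have "Min (((\<bullet>) c) ` S) \<in> ((\<bullet>) c) ` S" using fS eS by (intro Min_in) auto
  then obtain e' where e': "e' \<in> S" "Min (((\<bullet>) c) ` S) = c \<bullet> e'" by auto
  have lt: "c \<bullet> p < c \<bullet> e'" using e' S_def opt_not_iff[OF p] extpts_sub by blast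
  have "gap Z c = c \<bullet> e' - c \<bullet> p"
    unfolding gap_def using ne I opt_INF[OF p] e' S_def by auto
  thus "\<exists>e\<in>extpts Z. c \<bullet> p < c \<bullet> e \<and> c \<bullet> e - c \<bullet> p \<le> \<delta>"
    using g lt e' S_def by auto
qed

lemma ce_bound:
  fixes Y :: "'a \<Rightarrow> real^'d" and g :: "'a \<Rightarrow> real^'d"
  assumes "prob_space M" "subalgebra M F" and Ym[measurable]: "Y \<in> borel_measurable M"
    and Yb: "\<forall>\<omega>\<in>space M. norm (Y \<omega>) \<le> 1"
    and ce: "\<forall>i. AE \<omega> in M. g \<omega> $ i = real_cond_exp M F (\<lambda>\<omega>. Y \<omega> $ i) \<omega>"
  shows "AE \<omega> in M. g \<omega> \<bullet> v \<le> norm v"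
proof -
  interpret prob_space M by fact
  interpret finite_measure_subalgebra M F
    by unfold_locales (use assms(2) in auto)
  have Yim[measurable]: "(\<lambda>\<omega>. Y \<omega> $ i) \<in> borel_measurable M" for i
    using measurable_compose[of Y M borel, OF _ borel_measurable_continuous_onI[OF linear_continuous_on[OF bounded_linear_vec_nth]]] Ym
    by (simp add: comp_def)
  have intY: "integrable M (\<lambda>\<omega>. v $ i * Y \<omega> $ i)" for i
  proof (rule integrable_const_bound[where B="norm v"])
    show "AE \<omega> in M. norm (v $ i * Y \<omega> $ i) \<le> norm v"
    proof (rule AE_I2)
      fix \<omega> assume w: "\<omega> \<in> space M"
      have "norm (v $ i * Y \<omega> $ i) \<le> norm v * norm (Y \<omega>)"
        unfolding norm_mult by (intro mult_mono) (auto simp: component_le_norm_cart)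
      also have "\<dots> \<le> norm v" using Yb w by (simp add: mult_left_le)
      finally show "norm (v $ i * Y \<omega> $ i) \<le> norm v" .
    qed
  qed measurable
  have intY1: "integrable M (\<lambda>\<omega>. Y \<omega> $ i)" for i
    proof (rule integrable_const_bound[where B=1])
    show "AE \<omega> in M. norm (Y \<omega> $ i) \<le> 1"
      proof (rule AE_I2)
      fix \<omega> assume w: "\<omega> \<in> space M"
      have "norm (Y \<omega> $ i) \<le> norm (Y \<omega>)" by (rule Finite_Cartesian_Product.norm_nth_le)
      then show "norm (Y \<omega> $ i) \<le> 1" using Yb w by auto
    qed
  qed measurable
  have a1: "AE \<omega> in M. \<forall>i\<in>UNIV. g \<omega> $ i = real_cond_exp M F (\<lambda>\<omega>. Y \<omega> $ i) \<omega>"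
    by (intro AE_finite_allI) (use ce in auto)
  have a2: "AE \<omega> in M. \<forall>i\<in>UNIV. real_cond_exp M F (\<lambda>\<omega>. v $ i * Y \<omega> $ i) \<omega> = v $ i * real_cond_exp M F (\<lambda>\<omega>. Y \<omega> $ i) \<omega>"
    by (intro AE_finite_allI real_cond_exp_cmult intY1) auto
  have a3: "AE \<omega> in M. real_cond_exp M F (\<lambda>\<omega>. \<Sum>i\<in>UNIV. v $ i * Y \<omega> $ i) \<omega> = (\<Sum>i\<in>UNIV. real_cond_exp M F (\<lambda>\<omega>. v $ i * Y \<omega> $ i) \<omega>)"
    by (rule real_cond_exp_sum) (rule intY)
  have a4: "AE \<omega> in M. real_cond_exp M F (\<lambda>\<omega>. \<Sum>i\<in>UNIV. v $ i * Y \<omega> $ i) \<omega> \<le> norm v"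
  proof (rule real_cond_exp_le_c)
    show "integrable M (\<lambda>\<omega>. \<Sum>i\<in>UNIV. v $ i * Y \<omega> $ i)" using intY by auto
    show "AE \<omega> in M. (\<Sum>i\<in>UNIV. v $ i * Y \<omega> $ i) \<le> norm v"
    proof (rule AE_I2)
      fix \<omega> assume w: "\<omega> \<in> space M"
      have "(\<Sum>i\<in>UNIV. v $ i * Y \<omega> $ i) = v \<bullet> Y \<omega>" by (simp add: inner_vec_def)
      also have "\<dots> \<le> norm v * norm (Y \<omega>)" by (rule norm_cauchy_schwarz)
      also have "\<dots> \<le> norm v" using Yb w by (simp add: mult_left_le)
      finally show "(\<Sum>i\<in>UNIV. v $ i * Y \<omega> $ i) \<le> norm v" .
    qed
  qed
  show ?thesis using a1 a2 a3 a4
  proof eventually_elim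
    case (elim \<omega>)
    have "g \<omega> \<bullet> v = (\<Sum>i\<in>UNIV. v $ i * g \<omega> $ i)" by (simp add: inner_vec_def mult.commute)
    also have "\<dots> = (\<Sum>i\<in>UNIV. real_cond_exp M F (\<lambda>\<omega>. v $ i * Y \<omega> $ i) \<omega>)"
      using elim by simp
    finally show ?case using elim by simp
  qed
qed



theorem lemma1:
  fixes M :: "'a measure"
    and X :: "'a \<Rightarrow> real^'p" and Y :: "'a \<Rightarrow> real^'d"
    and f :: "real^'p \<Rightarrow> real^'d"
    and A :: "real^'d^'m" and b :: "real^'m"
    and B \<alpha> \<gamma> :: real
    and pistar pol :: "real^'p \<Rightarrow> real^'d"
  assumes "prob_space M"
    and "X \<in> borel_measurable M" and "Y \<in> borel_measurable M"
    and "\<forall>\<omega>\<in>space M. norm (Y \<omega>) \<le> 1"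
    and "f \<in> borel_measurable borel"
    and "\<forall>i. AE \<omega> in M. f (X \<omega>) $ i
            = real_cond_exp M (vimage_algebra (space M) X borel) (\<lambda>\<omega>. Y \<omega> $ i) \<omega>"
    and "B > 0" and "\<forall>z \<in> polyZ A b. norm z \<le> B"
    and "pistar \<in> borel_measurable borel"
    and "\<forall>x. pistar x \<in> extpts (polyZ A b) \<and> pistar x \<in> optset (polyZ A b) (f x)"
    and "\<alpha> > 0" and "\<gamma> > 0"
    and "\<forall>\<delta>>0. measure M {\<omega> \<in> space M. 0 < gap (polyZ A b) (f (X \<omega>))
                                   \<and> gap (polyZ A b) (f (X \<omega>)) \<le> \<delta>}
                 \<le> (\<gamma> * \<delta> / B) powr \<alpha>"
    and "AE \<omega> in M. \<forall>z1 \<in> optset (polyZ A b) (f (X \<omega>)).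
                      \<forall>z2 \<in> optset (polyZ A b) (f (X \<omega>)). z1 = z2"
    and "pol \<in> borel_measurable borel"
    and "\<forall>x. pol x \<in> extpts (polyZ A b)"
  shows "dpol M X f B pistar pol \<le> 2 * dDelta M X pistar pol
       \<and> dDelta M X pistar pol
           \<le> ((\<alpha> * \<gamma> powr \<alpha>) powr (- (\<alpha> / (\<alpha> + 1))) * (\<alpha> + 1) * \<gamma> powr \<alpha>)
              * (dpol M X f B pistar pol) powr (\<alpha> / (\<alpha> + 1))"
proof -
  note Xm[measurable] = assms(2) and Ym[measurable] = assms(3) and fm[measurable] = assms(5)
    and psm[measurable] = assms(9) and polm[measurable] = assms(15)
  interpret prob_space M by (rule assms(1))
  define Z where "Z = polyZ A b"
  define E where "E = extpts Z"
  have ps: "\<And>x. pistar x \<in> E" "\<And>x. pistar x \<in> optset Z (f x)" using assms(10) Z_def E_def by auto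
  have po: "\<And>x. pol x \<in> E" using assms(16) Z_def E_def by auto
  have EZ: "E \<subseteq> Z" using extpts_sub E_def by blast
  have finE: "finite E" unfolding E_def extpts_def Z_def
    by (rule finite_polyhedron_extreme_points[OF polyZ_polyhedron])
  have Zb: "\<forall>z\<in>Z. norm z \<le> B" using assms(8) Z_def by auto
  have cpt: "compact Z"
  unfolding compact_eq_bounded_closed proof (intro conjI)
    show "bounded Z" unfolding bounded_iff using Zb by blast
    show "closed Z" unfolding Z_def by (rule polyhedron_imp_closed[OF polyZ_polyhedron])
  qed
  have cvx: "convex Z" unfolding Z_def by (rule polyhedron_imp_convex[OF polyZ_polyhedron])
  define h where "h \<omega> = f (X \<omega>) \<bullet> (pol (X \<omega>) - pistar (X \<omega>))" for \<omega>
  have hm[measurable]: "h \<in> borel_measurable M" unfolding h_def by measurable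
  define S where "S = {\<omega> \<in> space M. pistar (X \<omega>) \<noteq> pol (X \<omega>)}"
  have Sm[measurable]: "S \<in> sets M" unfolding S_def by measurable
  have hnn: "0 \<le> h \<omega>" for \<omega>
  proof -
    have "pol (X \<omega>) \<in> Z" using po EZ by blast
    then show ?thesis using ps(2)[of "X \<omega>"] unfolding h_def optset_def by (simp add: inner_diff_right)
  qed
  have subalg: "subalgebra M (vimage_algebra (space M) X borel)"
    unfolding subalgebra_def
  proof
    show "space (vimage_algebra (space M) X borel) = space M" by simp
    have "X \<in> space M \<rightarrow> space borel" by simp
    then show "sets (vimage_algebra (space M) X borel) \<subseteq> sets M"
      unfolding sets_vimage_algebra2[OF \<open>X \<in> space M \<rightarrow> space borel\<close>]
      using measurable_sets[OF Xm] by auto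
  qed
  define D where "D = (\<lambda>(e1, e2). e1 - e2) ` (E \<times> E)"
  have "AE \<omega> in M. \<forall>v\<in>D. f (X \<omega>) \<bullet> v \<le> norm v"
    by (intro AE_finite_allI ce_bound[OF assms(1) subalg Ym assms(4) assms(6)]) (use finE D_def in auto)
  with AE_space have hle: "AE \<omega> in M. h \<omega> \<le> 2 * B * indicator S \<omega>"
  proof eventually_elim
    case (elim \<omega>)
    show ?case
    proof (cases "\<omega> \<in> S")
      case True
      have "pol (X \<omega>) - pistar (X \<omega>) \<in> D" unfolding D_def using po ps by force
      then have "h \<omega> \<le> norm (pol (X \<omega>) - pistar (X \<omega>))" using elim h_def by auto
      also have "\<dots> \<le> norm (pol (X \<omega>)) + norm (pistar (X \<omega>))" by (rule norm_triangle_ineq4)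
      also have "\<dots> \<le> B + B" using Zb po ps(1) EZ by (intro add_mono) blast+
      finally show ?thesis using True by simp
    next
      case False
      then show ?thesis using elim by (auto simp: S_def h_def)
    qed
  qed
  have hint: "integrable M h"
  proof (rule integrable_const_bound[where B="2*B"])
    show "AE \<omega> in M. norm (h \<omega>) \<le> 2 * B" using hle
    proof eventually_elim
      case (elim \<omega>)
      then show ?case using hnn[of \<omega>] assms(7) by (cases "\<omega> \<in> S") (auto simp: indicator_def)
    qed
  qed measurable
  have dp: "dpol M X f B pistar pol = (\<integral>\<omega>. h \<omega> \<partial>M) / B"
    unfolding dpol_def h_def by simp
  have dD: "dDelta M X pistar pol = measure M S"
    unfolding dDelta_def S_def by simp
  have I0: "0 \<le> (\<integral>\<omega>. h \<omega> \<partial>M)" using hnn by simp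
  have part1: "(\<integral>\<omega>. h \<omega> \<partial>M) \<le> 2 * B * measure M S"
  proof -
    have "(\<integral>\<omega>. h \<omega> \<partial>M) \<le> (\<integral>\<omega>. 2 * B * indicator S \<omega> \<partial>M)"
      by (rule integral_mono_AE[OF hint _ hle]) (simp add: Sm integrable_const_bound[where B=1])
    also have "\<dots> = 2 * B * measure M S" by simp
    finally show ?thesis .
  qed
  have first: "dpol M X f B pistar pol \<le> 2 * dDelta M X pistar pol"
    unfolding dp dD using part1 assms(7) by (simp add: divide_le_eq algebra_simps)
  have gapS: "AE \<omega> in M. \<omega> \<in> S \<longrightarrow> 0 < gap Z (f (X \<omega>)) \<and> gap Z (f (X \<omega>)) \<le> h \<omega>"
    using assms(14)
  proof eventually_elim
    case (elim \<omega>)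
    show ?case
    proof
      assume wS: "\<omega> \<in> S"
      have "pol (X \<omega>) \<notin> optset Z (f (X \<omega>))"
        using elim wS ps(2) unfolding S_def Z_def by blast
      then have lt: "f (X \<omega>) \<bullet> pistar (X \<omega>) < f (X \<omega>) \<bullet> pol (X \<omega>)"
        using opt_not_iff[OF ps(2)] po EZ by blast
      show "0 < gap Z (f (X \<omega>)) \<and> gap Z (f (X \<omega>)) \<le> h \<omega>"
        using gap_pos[OF ps(2) finE[unfolded E_def] po[unfolded E_def] lt]
        unfolding h_def by (simp add: inner_diff_right)
    qed
  qed
  have second: "measure M S \<le> ((\<alpha> * \<gamma> powr \<alpha>) powr (- (\<alpha> / (\<alpha> + 1))) * (\<alpha> + 1) * \<gamma> powr \<alpha>)
              * (dpol M X f B pistar pol) powr (\<alpha> / (\<alpha> + 1))"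
  proof (cases "(\<integral>\<omega>. h \<omega> \<partial>M) = 0")
    case True
    then have "AE \<omega> in M. h \<omega> = 0"
      using integral_nonneg_eq_0_iff_AE[OF hint] hnn by simp
    with gapS have "AE \<omega> in M. \<omega> \<in> S \<longrightarrow> \<omega> \<in> {}" by eventually_elim auto
    then have "measure M S \<le> measure M {}" by (intro finite_measure_mono_AE) auto
    then show ?thesis using True dp by simp
  next
    case False
    define d where "d = dpol M X f B pistar pol"
    have dpos: "0 < d" using False I0 dp assms(7) d_def by simp
    define k where "k = \<alpha> * \<gamma> powr \<alpha>"
    have kpos: "0 < k" using assms(11,12) k_def by simp
    define t where "t = (d / k) powr (1 / (\<alpha> + 1))"
    have tpos: "0 < t" using dpos kpos t_def by simp
    define \<delta> where "\<delta> = B * t"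
    have dlpos: "0 < \<delta>" using tpos assms(7) \<delta>_def by simp
    define G where "G = {\<omega> \<in> space M. 0 < gap (polyZ A b) (f (X \<omega>)) \<and> gap (polyZ A b) (f (X \<omega>)) \<le> \<delta>}"
    define H where "H = {\<omega> \<in> space M. \<delta> \<le> h \<omega>}"
    have Geq: "G = (\<Union>e\<in>E. {\<omega> \<in> space M. f (X \<omega>) \<bullet> pistar (X \<omega>) < f (X \<omega>) \<bullet> e
                  \<and> f (X \<omega>) \<bullet> e - f (X \<omega>) \<bullet> pistar (X \<omega>) \<le> \<delta>})"
      unfolding G_def E_def Z_def[symmetric] using gap_char[OF ps(2) finE[unfolded E_def] cpt cvx] by auto
    have Gm: "G \<in> sets M" unfolding Geq
      by (intro sets.finite_UN finE) measurable
    have Hm: "H \<in> sets M" unfolding H_def by measurable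
    have "AE \<omega> in M. \<omega> \<in> S \<longrightarrow> \<omega> \<in> G \<union> H" using gapS
      by eventually_elim (auto simp: G_def H_def S_def Z_def)
    then have "measure M S \<le> measure M (G \<union> H)" by (intro finite_measure_mono_AE Gm Hm sets.Un)
    also have "\<dots> \<le> measure M G + measure M H" by (rule measure_Un_le[OF Gm Hm])
    also have "measure M G \<le> (\<gamma> * \<delta> / B) powr \<alpha>" using assms(13) dlpos G_def by simp
    also have "measure M H \<le> (\<integral>\<omega>. h \<omega> \<partial>M) / \<delta>"
      unfolding H_def by (rule integral_Markov_inequality_measure[OF hint sets.top]) (use hnn dlpos in auto)
    finally have main: "measure M S \<le> (\<gamma> * \<delta> / B) powr \<alpha> + (\<integral>\<omega>. h \<omega> \<partial>M) / \<delta>" by simp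
    define q where "q = (d / k) powr (\<alpha> / (\<alpha> + 1))"
    have e1: "(\<gamma> * \<delta> / B) powr \<alpha> = \<gamma> powr \<alpha> * q"
    proof -
      have "(\<gamma> * \<delta> / B) = \<gamma> * t" using assms(7) \<delta>_def by simp
      then have "(\<gamma> * \<delta> / B) powr \<alpha> = \<gamma> powr \<alpha> * t powr \<alpha>"
        using assms(12) tpos by (simp add: powr_mult)
      also have "t powr \<alpha> = q" unfolding t_def q_def using dpos kpos by (simp add: powr_powr)
      finally show ?thesis .
    qed
    have e2: "(\<integral>\<omega>. h \<omega> \<partial>M) / \<delta> = k * q"
    proof -
      have "(\<integral>\<omega>. h \<omega> \<partial>M) / \<delta> = d / t" using dp d_def \<delta>_def assms(7) by simp
      also have "d = k * (d / k) powr 1" using kpos dpos by simp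
      also have "k * (d / k) powr 1 / t = k * ((d / k) powr 1 / (d / k) powr (1 / (\<alpha> + 1)))"
        unfolding t_def by simp
      also have "(d / k) powr 1 / (d / k) powr (1 / (\<alpha> + 1)) = (d / k) powr (1 - 1 / (\<alpha> + 1))"
        by (rule powr_diff[symmetric])
      also have "1 - 1 / (\<alpha> + 1) = \<alpha> / (\<alpha> + 1)" using assms(11) by (simp add: field_simps)
      finally show ?thesis unfolding q_def .
    qed
    have e3: "q = k powr (- (\<alpha> / (\<alpha> + 1))) * d powr (\<alpha> / (\<alpha> + 1))"
      unfolding q_def using dpos kpos by (simp add: powr_divide powr_minus_divide)
    have "measure M S \<le> \<gamma> powr \<alpha> * q + k * q" using main e1 e2 by simp
    also have "\<dots> = (\<alpha> + 1) * \<gamma> powr \<alpha> * q" unfolding k_def by (simp add: algebra_simps)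
    also have "\<dots> = (k powr (- (\<alpha> / (\<alpha> + 1))) * (\<alpha> + 1) * \<gamma> powr \<alpha>) * d powr (\<alpha> / (\<alpha> + 1))"
      unfolding e3 by (simp add: algebra_simps)
    finally show ?thesis unfolding k_def d_def .
  qed
  show ?thesis using first second dD by simp
qed

end
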